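(* Let $N\ge1$, $\lambda_1,\dots,\lambda_N$ distinct, $\mu_1,\dots,\mu_N$ nonzero constants, $B=\mathrm{diag}(\mu_j)$. If $P_i,Q_i$ ($i=1,2,3$) solve the nonlinearized spatial system (defined below), then there exist $N$ integrals of motion $\alpha_0,\dots,\alpha_{N-1}$ of that system such that \[q=\sqrt2(\langle P_1,BQ_2\rangle+\langle P_2,BQ_3\rangle),\qquad r=\sqrt2(\langle P_2,BQ_1\rangle+\langle P_3,BQ_2\rangle)\] solve the $N$-th order stationary AKNS equation \[K_N+\sum_{i=0}^{N-1}\alpha_iK_i=0.\]
   Context: Potential $u=(q,r)^T$; $U(u,\lambda)=\begin{pmatrix}-2\lambda&\sqrt2 q&0\\ \sqrt2 r&0&\sqrt2 q\\ 0&\sqrt2 r&2\lambda\end{pmatrix}$. Differential polynomials $a_i,b_i,c_i$ in $q,r$ and their $x$-derivatives: $a_0=-1$, $b_0=c_0=0$, and for $i\ge0$, $a_{i+1}=\frac12\partial^{-1}(q c_{i,x}+r b_{i,x})$, $b_{i+1}=-\frac12 b_{i,x}-q a_i$, $c_{i+1}=\frac12 c_{i,x}-r a_i$ ($\partial=d/dx$), with constants of integration fixed by $a_i|_{u=0}=b_i|_{u=0}=c_i|_{u=0}=0$ for $i\ge1$. The AKNS vector fields are $K_n=(-2b_{n+1},\,2c_{n+1})^T$, $n\ge0$. Phase space $\mathbb{R}^{6N}$ with coordinates $\phi_{ij},\psi_{ij}$ ($i=1,2,3$, $j=1,\dots,N$), $P_i=(\phi_{i1},\dots,\phi_{iN})^T$,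 $Q_i=(\psi_{i1},\dots,\psi_{iN})^T$, $\langle\cdot,\cdot\rangle$ the standard inner product on $\mathbb{R}^N$. With $\tilde u=(\tilde q,\tilde r)^T$, $\tilde q=\sqrt2(\langle P_1,BQ_2\rangle+\langle P_2,BQ_3\rangle)$, $\tilde r=\sqrt2(\langle P_2,BQ_1\rangle+\langle P_3,BQ_2\rangle)$, the nonlinearized spatial system is $(\phi_{1j},\phi_{2j},\phi_{3j})^T_x=U(\tilde u,\lambda_j)(\phi_{1j},\phi_{2j},\phi_{3j})^T$, $(\psi_{1j},\psi_{2j},\psi_{3j})^T_x=-U(\tilde u,\lambda_j)^T(\psi_{1j},\psi_{2j},\psi_{3j})^T$, $j=1,\dots,N$. An integral of motion is a function of $P_i,Q_i$ constant along solutions of this system. *)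

theory Defs
  imports "HOL-Analysis.Analysis"
begin

text \<open>A differential polynomial in q, r is represented by an expression over the
jet variables q^(k) (DQ k) and r^(k) (DR k). It is evaluated on jets
(qj k = k-th derivative of q, rj k = k-th derivative of r).\<close>

datatype dpoly = DConst real | DQ nat | DR nat | DAdd dpoly dpoly | DMul dpoly dpoly

fun deval :: "dpoly \<Rightarrow> (nat \<Rightarrow> real) \<Rightarrow> (nat \<Rightarrow> real) \<Rightarrow> real" where
  "deval (DConst c) qj rj = c"
| "deval (DQ k) qj rj = qj k"
| "deval (DR k) qj rj = rj k"
| "deval (DAdd e1 e2) qj rj = deval e1 qj rj + deval e2 qj rj"
| "deval (DMul e1 e2) qj rj = deval e1 qj rj * deval e2 qj rj"

fun dD :: "dpoly \<Rightarrow> dpoly" where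
  "dD (DConst c) = DConst 0"
| "dD (DQ k) = DQ (Suc k)"
| "dD (DR k) = DR (Suc k)"
| "dD (DAdd e1 e2) = DAdd (dD e1) (dD e2)"
| "dD (DMul e1 e2) = DAdd (DMul (dD e1) e2) (DMul e1 (dD e2))"

text \<open>The antiderivative a_{i+1} is a differential
polynomial whose total derivative is (q c_{i,x} + r b_{i,x})/2 and which vanishes at u = 0
(this determines it uniquely as a function on jets).\<close>
fun abc :: "nat \<Rightarrow> dpoly \<times> dpoly \<times> dpoly" where
  "abc 0 = (DConst (-1), DConst 0, DConst 0)"
| "abc (Suc i) =
    (let (a, b, c) = abc i;
         integrand = DMul (DConst (1/2)) (DAdd (DMul (DQ 0) (dD c)) (DMul (DR 0) (dD b)));
         a' = (SOME e. (\<forall>qj rj. deval (dD e) qj rj = deval integrand qj rj)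
                        \<and> deval e (\<lambda>_. 0) (\<lambda>_. 0) = 0);
         b' = DAdd (DMul (DConst (-1/2)) (dD b)) (DMul (DConst (-1)) (DMul (DQ 0) a));
         c' = DAdd (DMul (DConst (1/2)) (dD c)) (DMul (DConst (-1)) (DMul (DR 0) a))
     in (a', b', c'))"

definition a_dp :: "nat \<Rightarrow> dpoly" where "a_dp i = fst (abc i)"
definition b_dp :: "nat \<Rightarrow> dpoly" where "b_dp i = fst (snd (abc i))"
definition c_dp :: "nat \<Rightarrow> dpoly" where "c_dp i = snd (snd (abc i))"

text \<open>The AKNS vector field K_n = (-2 b_{n+1}, 2 c_{n+1}), evaluated on jets.\<close>
definition K1 :: "nat \<Rightarrow> (nat \<Rightarrow> real) \<Rightarrow> (nat \<Rightarrow> real) \<Rightarrow> real" where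
  "K1 n qj rj = -2 * deval (b_dp (Suc n)) qj rj"
definition K2 :: "nat \<Rightarrow> (nat \<Rightarrow> real) \<Rightarrow> (nat \<Rightarrow> real) \<Rightarrow> real" where
  "K2 n qj rj = 2 * deval (c_dp (Suc n)) qj rj"

definition jet :: "(real \<Rightarrow> real) \<Rightarrow> real \<Rightarrow> nat \<Rightarrow> real" where
  "jet f x = (\<lambda>k. (deriv ^^ k) f x)"

text \<open>U(u,lambda), indices 1..3.\<close>
definition Umat :: "real \<Rightarrow> real \<Rightarrow> real \<Rightarrow> nat \<Rightarrow> nat \<Rightarrow> real" where
  "Umat q r lam i k =
     (if i = 1 \<and> k = 1 then -2 * lam
      else if i = 1 \<and> k = 2 then sqrt 2 * q
      else if i = 2 \<and> k = 1 then sqrt 2 * r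
      else if i = 2 \<and> k = 3 then sqrt 2 * q
      else if i = 3 \<and> k = 2 then sqrt 2 * r
      else if i = 3 \<and> k = 3 then 2 * lam
      else 0)"

text \<open>A phase-space point: phi i j = phi_{ij}, psi i j = psi_{ij} (i = 1..3, j = 1..N);
B = diag(mu_1, ..., mu_N).\<close>
type_synonym state = "nat \<Rightarrow> nat \<Rightarrow> real"

definition qt :: "nat \<Rightarrow> (nat \<Rightarrow> real) \<Rightarrow> state \<Rightarrow> state \<Rightarrow> real" where
  "qt N mu phi psi = sqrt 2 * ((\<Sum>j=1..N. phi 1 j * (mu j * psi 2 j))
                             + (\<Sum>j=1..N. phi 2 j * (mu j * psi 3 j)))"

definition rt :: "nat \<Rightarrow> (nat \<Rightarrow> real) \<Rightarrow> state \<Rightarrow> state \<Rightarrow> real" where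
  "rt N mu phi psi = sqrt 2 * ((\<Sum>j=1..N. phi 2 j * (mu j * psi 1 j))
                             + (\<Sum>j=1..N. phi 3 j * (mu j * psi 2 j)))"

definition solves :: "nat \<Rightarrow> (nat \<Rightarrow> real) \<Rightarrow> (nat \<Rightarrow> real) \<Rightarrow> real set
                      \<Rightarrow> (real \<Rightarrow> state) \<Rightarrow> (real \<Rightarrow> state) \<Rightarrow> bool" where
  "solves N lam mu I phi psi \<longleftrightarrow>
     (\<forall>x\<in>I. \<forall>i\<in>{1..3}. \<forall>j\<in>{1..N}.
        ((\<lambda>t. phi t i j) has_real_derivative
           (\<Sum>k=1..3. Umat (qt N mu (phi x) (psi x)) (rt N mu (phi x) (psi x)) (lam j) i k
                        * phi x k j)) (at x)
      \<and> ((\<lambda>t. psi t i j) has_real_derivative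
           - (\<Sum>k=1..3. Umat (qt N mu (phi x) (psi x)) (rt N mu (phi x) (psi x)) (lam j) k i
                        * psi x k j)) (at x))"

definition integral_of_motion :: "nat \<Rightarrow> (nat \<Rightarrow> real) \<Rightarrow> (nat \<Rightarrow> real)
                                   \<Rightarrow> (state \<Rightarrow> state \<Rightarrow> real) \<Rightarrow> bool" where
  "integral_of_motion N lam mu F \<longleftrightarrow>
     (\<forall>I phi psi. open I \<and> is_interval I \<and> solves N lam mu I phi psi \<longrightarrow>
        (\<forall>x\<in>I. \<forall>y\<in>I. F (phi x) (psi x) = F (phi y) (psi y)))"

end

theory Submission
  imports Defs "HOL-Computational_Algebra.Polynomial"
begin


lemma abc_Suc_parts:
  "a_dp (Suc i) = (SOME e. (\<forall>qj rj. deval (dD e) qj rj = deval (DMul (DConst (1/2)) (DAdd (DMul (DQ 0) (dD (c_dp i))) (DMul (DR 0) (dD (b_dp i))))) qj rj) \<and> deval e (\<lambda>_. 0) (\<lambda>_. 0) = 0)"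
  "b_dp (Suc i) = DAdd (DMul (DConst (-1/2)) (dD (b_dp i))) (DMul (DConst (-1)) (DMul (DQ 0) (a_dp i)))"
  "c_dp (Suc i) = DAdd (DMul (DConst (1/2)) (dD (c_dp i))) (DMul (DConst (-1)) (DMul (DR 0) (a_dp i)))"
  by (simp_all add: a_dp_def b_dp_def c_dp_def split_def Let_def)

lemma abc_0: "a_dp 0 = DConst (-1)" "b_dp 0 = DConst 0" "c_dp 0 = DConst 0"
  by (simp_all add: a_dp_def b_dp_def c_dp_def)

lemma dD_zero: "deval (dD e) (\<lambda>_. 0) (\<lambda>_. 0) = 0"
  by (induct e) auto

lemma bc_zero: "deval (b_dp k) (\<lambda>_. 0) (\<lambda>_. 0) = 0 \<and> deval (c_dp k) (\<lambda>_. 0) (\<lambda>_. 0) = 0"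
  by (induct k) (auto simp: abc_Suc_parts abc_0 dD_zero)

fun dsum :: "(nat \<Rightarrow> dpoly) \<Rightarrow> nat list \<Rightarrow> dpoly" where
  "dsum f [] = DConst 0"
| "dsum f (k # ks) = DAdd (f k) (dsum f ks)"

lemma deval_dsum: "deval (dsum f ks) qj rj = (\<Sum>k\<leftarrow>ks. deval (f k) qj rj)"
  by (induct ks) auto

lemma dD_dsum: "deval (dD (dsum f ks)) qj rj = (\<Sum>k\<leftarrow>ks. deval (dD (f k)) qj rj)"
  by (induct ks) auto

lemma key_identity:
  fixes A B C A' B' C' :: "nat \<Rightarrow> real" and q r :: real
  assumes A0: "A 0 = -1" and B0: "B 0 = 0" and C0: "C 0 = 0"
    and BS: "\<And>k. B (Suc k) = -1/2 * B' k - q * A k"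
    and CS: "\<And>k. C (Suc k) = 1/2 * C' k - r * A k"
    and AD: "\<And>k. 1 \<le> k \<Longrightarrow> k < Suc m \<Longrightarrow> A' k = q * C k - r * B k"
  shows "(\<Sum>k\<in>{1..<Suc m}. A' k * A (Suc m - k) + A k * A' (Suc m - k))
       + (\<Sum>k\<in>{0..Suc m}. B' k * C (Suc m - k) + B k * C' (Suc m - k))
       = 2 * (q * C (Suc m) - r * B (Suc m))"
proof -
  define n where "n = Suc m"
  have B': "B' k = -2 * B (Suc k) - 2 * q * A k" for k using BS[of k] by linarith
  have C': "C' k = 2 * C (Suc k) + 2 * r * A k" for k using CS[of k] by linarith
  have S1: "(\<Sum>k\<in>{1..<n}. A' k * A (n - k)) = (\<Sum>k\<in>{1..m}. (q * C k - r * B k) * A (n - k))"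
    unfolding n_def using AD by (intro sum.cong) auto
  have S2: "(\<Sum>k\<in>{1..<n}. A k * A' (n - k)) = (\<Sum>k\<in>{1..<n}. A' k * A (n - k))"
    by (subst sum.atLeastLessThan_rev) (auto simp: n_def intro!: sum.cong)
  have S3: "(\<Sum>k\<in>{0..n}. B' k * C (n - k)) = (\<Sum>k\<le>m. B' k * C (Suc m - k))"
    by (simp add: n_def C0 atLeast0AtMost)
  have S4: "(\<Sum>k\<in>{0..n}. B k * C' (n - k)) = (\<Sum>k\<le>m. B (Suc k) * C' (m - k))"
    by (simp only: n_def atLeast0AtMost sum.atMost_Suc_shift) (simp add: B0)
  have S34: "(\<Sum>k\<le>m. B' k * C (Suc m - k)) + (\<Sum>k\<le>m. B (Suc k) * C' (m - k))
      = -2 * q * (\<Sum>k\<le>m. A k * C (Suc m - k)) + 2 * r * (\<Sum>k\<le>m. B (Suc k) * A (m - k))"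
  proof -
    have "(\<Sum>k\<le>m. B' k * C (Suc m - k)) + (\<Sum>k\<le>m. B (Suc k) * C' (m - k))
       = (\<Sum>k\<le>m. -2 * q * (A k * C (Suc m - k)) + 2 * r * (B (Suc k) * A (m - k)))"
      unfolding sum.distrib[symmetric] B' C' by (rule sum.cong) (auto simp: Suc_diff_le algebra_simps)
    then show ?thesis by (simp only: sum.distrib sum_distrib_left[symmetric] mult.assoc)
  qed
  have T1: "(\<Sum>k\<le>m. A k * C (Suc m - k)) = - C n + (\<Sum>k\<in>{1..m}. A k * C (n - k))"
    using sum.atLeast1_atMost_eq[of "\<lambda>k. A k * C (Suc m - k)" m]
    by (simp only: n_def sum.atMost_shift) (simp add: A0)
  have T2: "(\<Sum>k\<le>m. B (Suc k) * A (m - k)) = - B n + (\<Sum>k\<in>{1..m}. B k * A (n - k))"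
  proof -
    have "(\<Sum>k\<le>m. B (Suc k) * A (m - k)) = (\<Sum>k\<in>{1..Suc m}. B k * A (Suc m - k))"
      using sum.shift_bounds_cl_Suc_ivl[of "\<lambda>k. B k * A (Suc m - k)" 0 m] by (simp add: atLeast0AtMost)
    also have "\<dots> = (\<Sum>k\<in>{1..m}. B k * A (Suc m - k)) + B (Suc m) * A 0"
      by simp
    finally show ?thesis by (simp add: n_def A0)
  qed
  have "(\<Sum>k\<in>{1..<n}. A' k * A (n - k) + A k * A' (n - k)) = 2 * (\<Sum>k\<in>{1..m}. (q * C k - r * B k) * A (n - k))"
    by (simp only: sum.distrib S2 S1)
  moreover have "(\<Sum>k\<in>{0..n}. B' k * C (n - k) + B k * C' (n - k))
      = -2 * q * (- C n + (\<Sum>k\<in>{1..m}. A k * C (n - k))) + 2 * r * (- B n + (\<Sum>k\<in>{1..m}. B k * A (n - k)))"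
    by (simp only: sum.distrib S3 S4 S34 T1 T2)
  moreover have "(\<Sum>k\<in>{1..m}. (q * C k - r * B k) * A (n - k)) = q * (\<Sum>k\<in>{1..m}. A k * C (n - k)) - r * (\<Sum>k\<in>{1..m}. B k * A (n - k))"
  proof -
    have T3: "(\<Sum>k\<in>{1..m}. C k * A (n - k)) = (\<Sum>k\<in>{1..m}. A k * C (n - k))"
      by (subst sum.atLeastAtMost_rev) (auto simp: n_def intro!: sum.cong)
    show ?thesis
      using T3 by (simp add: sum_subtractf left_diff_distrib sum_distrib_left[symmetric] mult.assoc)
  qed
  ultimately show ?thesis unfolding n_def[symmetric] by (simp add: algebra_simps)
qed


lemma a_prop:
  "(\<forall>qj rj. deval (dD (a_dp n)) qj rj = qj 0 * deval (c_dp n) qj rj - rj 0 * deval (b_dp n) qj rj)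
   \<and> (n \<ge> 1 \<longrightarrow> deval (a_dp n) (\<lambda>_. 0) (\<lambda>_. 0) = 0)"
proof (induction n rule: less_induct)
  case (less n)
  show ?case
  proof (cases n)
    case 0
    then show ?thesis by (simp add: abc_0)
  next
    case (Suc i)
    define P where "P e \<longleftrightarrow> (\<forall>qj rj. deval (dD e) qj rj = deval (DMul (DConst (1/2)) (DAdd (DMul (DQ 0) (dD (c_dp i))) (DMul (DR 0) (dD (b_dp i))))) qj rj) \<and> deval e (\<lambda>_. 0) (\<lambda>_. 0) = 0" for e
    define e0 where "e0 = DMul (DConst (1/2)) (DAdd (dsum (\<lambda>k. DMul (a_dp k) (a_dp (n-k))) [1..<n]) (dsum (\<lambda>k. DMul (b_dp k) (c_dp (n-k))) [0..<Suc n]))"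
    have "P e0"
    proof -
      have D: "deval (dD e0) qj rj = deval (DMul (DConst (1/2)) (DAdd (DMul (DQ 0) (dD (c_dp i))) (DMul (DR 0) (dD (b_dp i))))) qj rj" for qj rj
      proof -
        let ?A = "\<lambda>k. deval (a_dp k) qj rj" and ?B = "\<lambda>k. deval (b_dp k) qj rj" and ?C = "\<lambda>k. deval (c_dp k) qj rj"
        let ?A' = "\<lambda>k. deval (dD (a_dp k)) qj rj" and ?B' = "\<lambda>k. deval (dD (b_dp k)) qj rj" and ?C' = "\<lambda>k. deval (dD (c_dp k)) qj rj"
        have key: "(\<Sum>k\<in>{1..<Suc i}. ?A' k * ?A (Suc i - k) + ?A k * ?A' (Suc i - k))
           + (\<Sum>k\<in>{0..Suc i}. ?B' k * ?C (Suc i - k) + ?B k * ?C' (Suc i - k))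
           = 2 * (qj 0 * ?C (Suc i) - rj 0 * ?B (Suc i))"
        proof (rule key_identity)
          show "?A 0 = -1" "?B 0 = 0" "?C 0 = 0" by (simp_all add: abc_0)
          show "?B (Suc k) = -1/2 * ?B' k - qj 0 * ?A k" for k by (simp add: abc_Suc_parts)
          show "?C (Suc k) = 1/2 * ?C' k - rj 0 * ?A k" for k by (simp add: abc_Suc_parts)
          show "?A' k = qj 0 * ?C k - rj 0 * ?B k" if "1 \<le> k" "k < Suc i" for k
            using less.IH[of k] that Suc by auto
        qed
        have e: "deval (dD e0) qj rj = 1/2 * ((\<Sum>k\<in>{1..<Suc i}. ?A' k * ?A (Suc i - k) + ?A k * ?A' (Suc i - k))
           + (\<Sum>k\<in>{0..Suc i}. ?B' k * ?C (Suc i - k) + ?B k * ?C' (Suc i - k)))"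
          unfolding e0_def Suc
          by (simp only: deval.simps dD.simps dD_dsum sum_set_upt_conv_sum_list_nat[symmetric] set_upt
                 atLeastLessThanSuc_atLeastAtMost)
        show ?thesis unfolding e key by (simp add: abc_Suc_parts algebra_simps)
      qed
      have Z: "deval e0 (\<lambda>_. 0) (\<lambda>_. 0) = 0"
      proof -
        have "deval (a_dp k) (\<lambda>_. 0) (\<lambda>_. 0) = 0" if "1 \<le> k" "k < n" for k
          using less.IH[of k] that by auto
        then show ?thesis unfolding e0_def using bc_zero
          by (simp add: deval_dsum sum_set_upt_conv_sum_list_nat[symmetric])
      qed
      show ?thesis using D Z by (simp add: P_def)
    qed
    then have Pa: "P (a_dp n)" unfolding Suc abc_Suc_parts(1) P_def[symmetric] by (rule someI)
    show ?thesis
    proof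
      show "\<forall>qj rj. deval (dD (a_dp n)) qj rj = qj 0 * deval (c_dp n) qj rj - rj 0 * deval (b_dp n) qj rj"
        using Pa unfolding P_def Suc by (simp add: abc_Suc_parts algebra_simps)
      show "1 \<le> n \<longrightarrow> deval (a_dp n) (\<lambda>_. 0) (\<lambda>_. 0) = 0" using Pa P_def by simp
    qed
  qed
qed



datatype sx = SC real | SV bool nat nat | SA sx sx | SM sx sx

fun seval :: "sx \<Rightarrow> state \<Rightarrow> state \<Rightarrow> real" where
  "seval (SC c) p s = c"
| "seval (SV b i j) p s = (if b then p i j else s i j)"
| "seval (SA e1 e2) p s = seval e1 p s + seval e2 p s"
| "seval (SM e1 e2) p s = seval e1 p s * seval e2 p s"

fun ssumN :: "(nat \<Rightarrow> sx) \<Rightarrow> nat \<Rightarrow> sx" where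
  "ssumN f 0 = SC 0"
| "ssumN f (Suc n) = SA (ssumN f n) (f (Suc n))"

lemma seval_ssumN: "seval (ssumN f n) p s = (\<Sum>j=1..n. seval (f j) p s)"
  by (induct n) auto

fun swf :: "nat \<Rightarrow> sx \<Rightarrow> bool" where
  "swf N (SC c) = True"
| "swf N (SV b i j) = (i \<in> {1..3} \<and> j \<in> {1..N})"
| "swf N (SA e1 e2) = (swf N e1 \<and> swf N e2)"
| "swf N (SM e1 e2) = (swf N e1 \<and> swf N e2)"

lemma swf_ssumN: "(\<And>j. j \<in> {1..n} \<Longrightarrow> swf N (f j)) \<Longrightarrow> swf N (ssumN f n)"
  by (induct n) auto

definition qx :: "nat \<Rightarrow> (nat \<Rightarrow> real) \<Rightarrow> sx" where
  "qx N mu = SM (SC (sqrt 2)) (SA (ssumN (\<lambda>j. SM (SV True 1 j) (SM (SC (mu j)) (SV False 2 j))) N)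
                                   (ssumN (\<lambda>j. SM (SV True 2 j) (SM (SC (mu j)) (SV False 3 j))) N))"
definition rx :: "nat \<Rightarrow> (nat \<Rightarrow> real) \<Rightarrow> sx" where
  "rx N mu = SM (SC (sqrt 2)) (SA (ssumN (\<lambda>j. SM (SV True 2 j) (SM (SC (mu j)) (SV False 1 j))) N)
                                   (ssumN (\<lambda>j. SM (SV True 3 j) (SM (SC (mu j)) (SV False 2 j))) N))"

lemma seval_qx: "seval (qx N mu) p s = qt N mu p s"
  by (simp add: qx_def qt_def seval_ssumN)
lemma seval_rx: "seval (rx N mu) p s = rt N mu p s"
  by (simp add: rx_def rt_def seval_ssumN)
lemma swf_qx: "swf N (qx N mu)" and swf_rx: "swf N (rx N mu)"
  by (auto simp: qx_def rx_def intro!: swf_ssumN)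

definition umx :: "nat \<Rightarrow> (nat \<Rightarrow> real) \<Rightarrow> (nat \<Rightarrow> real) \<Rightarrow> nat \<Rightarrow> nat \<Rightarrow> nat \<Rightarrow> sx" where
  "umx N lam mu i k j =
     (if i = 1 \<and> k = 1 then SC (-2 * lam j)
      else if i = 1 \<and> k = 2 then SM (SC (sqrt 2)) (qx N mu)
      else if i = 2 \<and> k = 1 then SM (SC (sqrt 2)) (rx N mu)
      else if i = 2 \<and> k = 3 then SM (SC (sqrt 2)) (qx N mu)
      else if i = 3 \<and> k = 2 then SM (SC (sqrt 2)) (rx N mu)
      else if i = 3 \<and> k = 3 then SC (2 * lam j)
      else SC 0)"

lemma seval_umx: "seval (umx N lam mu i k j) p s = Umat (qt N mu p s) (rt N mu p s) (lam j) i k"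
  by (simp add: umx_def Umat_def seval_qx seval_rx)

lemma swf_umx: "swf N (umx N lam mu i k j)"
  by (simp add: umx_def swf_qx swf_rx)

fun sDer :: "nat \<Rightarrow> (nat \<Rightarrow> real) \<Rightarrow> (nat \<Rightarrow> real) \<Rightarrow> sx \<Rightarrow> sx" where
  "sDer N lam mu (SC c) = SC 0"
| "sDer N lam mu (SV b i j) =
     (if i \<in> {1..3} \<and> j \<in> {1..N} then
        (if b then SA (SA (SM (umx N lam mu i 1 j) (SV True 1 j)) (SM (umx N lam mu i 2 j) (SV True 2 j)))
                      (SM (umx N lam mu i 3 j) (SV True 3 j))
         else SM (SC (-1)) (SA (SA (SM (umx N lam mu 1 i j) (SV False 1 j)) (SM (umx N lam mu 2 i j) (SV False 2 j)))
                      (SM (umx N lam mu 3 i j) (SV False 3 j))))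
      else SC 0)"
| "sDer N lam mu (SA e1 e2) = SA (sDer N lam mu e1) (sDer N lam mu e2)"
| "sDer N lam mu (SM e1 e2) = SA (SM (sDer N lam mu e1) e2) (SM e1 (sDer N lam mu e2))"

lemma swf_sDer: "swf N e \<Longrightarrow> swf N (sDer N lam mu e)"
  by (induct e) (auto simp: swf_umx)

lemma swf_sDer_pow: "swf N e \<Longrightarrow> swf N ((sDer N lam mu ^^ k) e)"
  by (induct k) (auto simp: swf_sDer)

lemma sum13: "(\<Sum>k::nat=1..3. f k) = f 1 + f 2 + (f 3 :: real)"
  by (simp add: numeral_3_eq_3 numeral_2_eq_2)

lemma deriv_sx:
  assumes sol: "solves N lam mu I phi psi" and x: "x \<in> I" and wf: "swf N e"
  shows "((\<lambda>t. seval e (phi t) (psi t)) has_real_derivative seval (sDer N lam mu e) (phi x) (psi x)) (at x)"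
  using wf
proof (induction e)
  case (SC c)
  then show ?case by simp
next
  case (SV b i j)
  then have ij: "i \<in> {1..3}" "j \<in> {1..N}" by auto
  note S = sol[unfolded solves_def, rule_format, OF x ij, unfolded sum13]
  show ?case
  proof (cases b)
    case True
    then show ?thesis using ij S by (simp add: seval_umx algebra_simps)
  next
    case False
    then show ?thesis using ij S by (simp add: seval_umx algebra_simps)
  qed
next
  case (SA e1 e2)
  then show ?case by (auto intro!: derivative_eq_intros)
next
  case (SM e1 e2)
  then show ?case by (auto intro!: derivative_eq_intros simp: algebra_simps)
qed



lemma deriv_cong_open:
  fixes f g :: "real \<Rightarrow> real"
  assumes "open I" "\<And>t. t \<in> I \<Longrightarrow> f t = g t" "x \<in> I"
  shows "deriv f x = deriv g x"
proof -
  have "(\<lambda>D. (f has_real_derivative D) (at x)) = (\<lambda>D. (g has_real_derivative D) (at x))"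
    using assms by (intro ext iffI) (auto intro: has_field_derivative_transform_within_open)
  then show ?thesis by (simp add: deriv_def)
qed

lemma deriv_pow_cong:
  fixes f g :: "real \<Rightarrow> real"
  assumes "open I" "\<And>t. t \<in> I \<Longrightarrow> f t = g t" "x \<in> I"
  shows "(deriv ^^ k) f x = (deriv ^^ k) g x"
  using assms(3)
proof (induction k arbitrary: x)
  case 0
  then show ?case using assms by simp
next
  case (Suc k)
  show ?case
    using deriv_cong_open[OF assms(1) Suc.IH Suc.prems] by simp
qed

lemma jet_sx:
  assumes I: "open I" and sol: "solves N lam mu I phi psi" and wf: "swf N e" and x: "x \<in> I"
  shows "(deriv ^^ k) (\<lambda>t. seval e (phi t) (psi t)) x = seval ((sDer N lam mu ^^ k) e) (phi x) (psi x)"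
  using wf x
proof (induction k arbitrary: e x)
  case 0
  then show ?case by simp
next
  case (Suc k)
  have "(deriv ^^ Suc k) (\<lambda>t. seval e (phi t) (psi t)) x
        = (deriv ^^ k) (deriv (\<lambda>t. seval e (phi t) (psi t))) x"
    by (simp only: funpow_Suc_right o_apply)
  also have "\<dots> = (deriv ^^ k) (\<lambda>t. seval (sDer N lam mu e) (phi t) (psi t)) x"
    by (rule deriv_pow_cong[OF I _ Suc.prems(2)])
       (rule DERIV_imp_deriv, rule deriv_sx[OF sol _ Suc.prems(1)])
  also have "\<dots> = seval ((sDer N lam mu ^^ k) (sDer N lam mu e)) (phi x) (psi x)"
    by (rule Suc.IH[OF swf_sDer[OF Suc.prems(1)] Suc.prems(2)])
  also have "\<dots> = seval ((sDer N lam mu ^^ Suc k) e) (phi x) (psi x)"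
    by (simp only: funpow_Suc_right o_apply)
  finally show ?case .
qed

fun dcomp :: "nat \<Rightarrow> (nat \<Rightarrow> real) \<Rightarrow> (nat \<Rightarrow> real) \<Rightarrow> dpoly \<Rightarrow> sx" where
  "dcomp N lam mu (DConst c) = SC c"
| "dcomp N lam mu (DQ k) = (sDer N lam mu ^^ k) (qx N mu)"
| "dcomp N lam mu (DR k) = (sDer N lam mu ^^ k) (rx N mu)"
| "dcomp N lam mu (DAdd e1 e2) = SA (dcomp N lam mu e1) (dcomp N lam mu e2)"
| "dcomp N lam mu (DMul e1 e2) = SM (dcomp N lam mu e1) (dcomp N lam mu e2)"

lemma dcomp_dD: "dcomp N lam mu (dD e) = sDer N lam mu (dcomp N lam mu e)"
  by (induct e) auto

lemma swf_dcomp: "swf N (dcomp N lam mu e)"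
  by (induct e) (auto intro: swf_sDer_pow swf_qx swf_rx)

definition jq :: "nat \<Rightarrow> (nat \<Rightarrow> real) \<Rightarrow> (nat \<Rightarrow> real) \<Rightarrow> state \<Rightarrow> state \<Rightarrow> nat \<Rightarrow> real" where
  "jq N lam mu p s = (\<lambda>k. seval ((sDer N lam mu ^^ k) (qx N mu)) p s)"
definition jr :: "nat \<Rightarrow> (nat \<Rightarrow> real) \<Rightarrow> (nat \<Rightarrow> real) \<Rightarrow> state \<Rightarrow> state \<Rightarrow> nat \<Rightarrow> real" where
  "jr N lam mu p s = (\<lambda>k. seval ((sDer N lam mu ^^ k) (rx N mu)) p s)"

lemma deval_dcomp: "deval e (jq N lam mu p s) (jr N lam mu p s) = seval (dcomp N lam mu e) p s"
  by (induct e) (auto simp: jq_def jr_def)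

lemma jq0: "jq N lam mu p s 0 = qt N mu p s" and jr0: "jr N lam mu p s 0 = rt N mu p s"
  by (simp_all add: jq_def jr_def seval_qx seval_rx)

lemma traj_deriv_dp:
  assumes sol: "solves N lam mu I phi psi" and x: "x \<in> I"
  shows "((\<lambda>t. deval e (jq N lam mu (phi t) (psi t)) (jr N lam mu (phi t) (psi t))) has_real_derivative
           deval (dD e) (jq N lam mu (phi x) (psi x)) (jr N lam mu (phi x) (psi x))) (at x)"
  unfolding deval_dcomp dcomp_dD by (rule deriv_sx[OF sol x swf_dcomp])

lemma jet_eq:
  assumes I: "open I" and sol: "solves N lam mu I phi psi" and x: "x \<in> I"
  shows "jet (\<lambda>t. qt N mu (phi t) (psi t)) x = jq N lam mu (phi x) (psi x)"
    "jet (\<lambda>t. rt N mu (phi t) (psi t)) x = jr N lam mu (phi x) (psi x)"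
proof -
  have "jet (\<lambda>t. seval (qx N mu) (phi t) (psi t)) x = jq N lam mu (phi x) (psi x)"
    unfolding jet_def jq_def using jet_sx[OF I sol swf_qx x] by auto
  then show "jet (\<lambda>t. qt N mu (phi t) (psi t)) x = jq N lam mu (phi x) (psi x)" by (simp add: seval_qx)
  have "jet (\<lambda>t. seval (rx N mu) (phi t) (psi t)) x = jr N lam mu (phi x) (psi x)"
    unfolding jet_def jr_def using jet_sx[OF I sol swf_rx x] by auto
  then show "jet (\<lambda>t. rt N mu (phi t) (psi t)) x = jr N lam mu (phi x) (psi x)" by (simp add: seval_rx)
qed



definition AtS :: "nat \<Rightarrow> (nat \<Rightarrow> real) \<Rightarrow> (nat \<Rightarrow> real) \<Rightarrow> nat \<Rightarrow> state \<Rightarrow> state \<Rightarrow> real" where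
  "AtS N lam mu m p s = (if m = 0 then -1 else (\<Sum>j=1..N. mu j * lam j ^ (m - 1) * (p 1 j * s 1 j - p 3 j * s 3 j)))"
definition BtS :: "nat \<Rightarrow> (nat \<Rightarrow> real) \<Rightarrow> (nat \<Rightarrow> real) \<Rightarrow> nat \<Rightarrow> state \<Rightarrow> state \<Rightarrow> real" where
  "BtS N lam mu m p s = (if m = 0 then 0 else sqrt 2 * (\<Sum>j=1..N. mu j * lam j ^ (m - 1) * (p 1 j * s 2 j + p 2 j * s 3 j)))"
definition CtS :: "nat \<Rightarrow> (nat \<Rightarrow> real) \<Rightarrow> (nat \<Rightarrow> real) \<Rightarrow> nat \<Rightarrow> state \<Rightarrow> state \<Rightarrow> real" where
  "CtS N lam mu m p s = (if m = 0 then 0 else sqrt 2 * (\<Sum>j=1..N. mu j * lam j ^ (m - 1) * (p 2 j * s 1 j + p 3 j * s 2 j)))"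

lemma traj_j:
  assumes sol: "solves N lam mu I phi psi" and x: "x \<in> I" and j: "j \<in> {1..N}"
  defines "p \<equiv> phi x" and "s \<equiv> psi x"
  defines "q \<equiv> qt N mu p s" and "r \<equiv> rt N mu p s"
  shows "((\<lambda>t. phi t 1 j * psi t 1 j - phi t 3 j * psi t 3 j) has_real_derivative
            sqrt 2 * (q * (p 2 j * s 1 j + p 3 j * s 2 j) - r * (p 1 j * s 2 j + p 2 j * s 3 j))) (at x)"
    "((\<lambda>t. phi t 1 j * psi t 2 j + phi t 2 j * psi t 3 j) has_real_derivative
            -2 * lam j * (p 1 j * s 2 j + p 2 j * s 3 j) - sqrt 2 * q * (p 1 j * s 1 j - p 3 j * s 3 j)) (at x)"
    "((\<lambda>t. phi t 2 j * psi t 1 j + phi t 3 j * psi t 2 j) has_real_derivative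
            2 * lam j * (p 2 j * s 1 j + p 3 j * s 2 j) + sqrt 2 * r * (p 1 j * s 1 j - p 3 j * s 3 j)) (at x)"
proof -
  have S: "\<And>i. i \<in> {1..3} \<Longrightarrow> ((\<lambda>t. phi t i j) has_real_derivative
           (Umat q r (lam j) i 1 * p 1 j + Umat q r (lam j) i 2 * p 2 j + Umat q r (lam j) i 3 * p 3 j)) (at x)
        \<and> ((\<lambda>t. psi t i j) has_real_derivative
           - (Umat q r (lam j) 1 i * s 1 j + Umat q r (lam j) 2 i * s 2 j + Umat q r (lam j) 3 i * s 3 j)) (at x)"
    using sol[unfolded solves_def, rule_format, OF x _ j, unfolded sum13] unfolding p_def s_def q_def r_def by simp
  have P1: "((\<lambda>t. phi t 1 j) has_real_derivative (-2 * lam j * p 1 j + sqrt 2 * q * p 2 j)) (at x)"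
    using S[of 1] by (simp add: Umat_def)
  have P2: "((\<lambda>t. phi t 2 j) has_real_derivative (sqrt 2 * r * p 1 j + sqrt 2 * q * p 3 j)) (at x)"
    using S[of 2] by (simp add: Umat_def)
  have P3: "((\<lambda>t. phi t 3 j) has_real_derivative (sqrt 2 * r * p 2 j + 2 * lam j * p 3 j)) (at x)"
    using S[of 3] by (simp add: Umat_def)
  have Q1: "((\<lambda>t. psi t 1 j) has_real_derivative (2 * lam j * s 1 j - sqrt 2 * r * s 2 j)) (at x)"
    using S[of 1] by (simp add: Umat_def)
  have Q2: "((\<lambda>t. psi t 2 j) has_real_derivative (- sqrt 2 * q * s 1 j - sqrt 2 * r * s 3 j)) (at x)"
    using S[of 2] by (simp add: Umat_def)
  have Q3: "((\<lambda>t. psi t 3 j) has_real_derivative (- sqrt 2 * q * s 2 j - 2 * lam j * s 3 j)) (at x)"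
    using S[of 3] by (simp add: Umat_def)
  show "((\<lambda>t. phi t 1 j * psi t 1 j - phi t 3 j * psi t 3 j) has_real_derivative
            sqrt 2 * (q * (p 2 j * s 1 j + p 3 j * s 2 j) - r * (p 1 j * s 2 j + p 2 j * s 3 j))) (at x)"
    by (rule DERIV_cong[OF DERIV_diff[OF DERIV_mult[OF P1 Q1] DERIV_mult[OF P3 Q3]]])
       (simp add: p_def s_def algebra_simps)
  show "((\<lambda>t. phi t 1 j * psi t 2 j + phi t 2 j * psi t 3 j) has_real_derivative
            -2 * lam j * (p 1 j * s 2 j + p 2 j * s 3 j) - sqrt 2 * q * (p 1 j * s 1 j - p 3 j * s 3 j)) (at x)"
    by (rule DERIV_cong[OF DERIV_add[OF DERIV_mult[OF P1 Q2] DERIV_mult[OF P2 Q3]]])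
       (simp add: p_def s_def algebra_simps)
  show "((\<lambda>t. phi t 2 j * psi t 1 j + phi t 3 j * psi t 2 j) has_real_derivative
            2 * lam j * (p 2 j * s 1 j + p 3 j * s 2 j) + sqrt 2 * r * (p 1 j * s 1 j - p 3 j * s 3 j)) (at x)"
    by (rule DERIV_cong[OF DERIV_add[OF DERIV_mult[OF P2 Q1] DERIV_mult[OF P3 Q2]]])
       (simp add: p_def s_def algebra_simps)
qed


lemma qt_BtS1: "BtS N lam mu 1 p s = qt N mu p s"
  by (simp add: BtS_def qt_def sum.distrib algebra_simps)
lemma rt_CtS1: "CtS N lam mu 1 p s = rt N mu p s"
  by (simp add: CtS_def rt_def sum.distrib algebra_simps)

lemma sqrt2_twice: "sqrt 2 * (sqrt 2 * x) = 2 * (x::real)"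
  by (simp add: mult.assoc[symmetric])

lemma AtS_Suc: "AtS N lam mu (Suc m) p s = (\<Sum>j=1..N. mu j * lam j ^ m * (p 1 j * s 1 j - p 3 j * s 3 j))"
  by (simp add: AtS_def)
lemma BtS_Suc: "BtS N lam mu (Suc m) p s = sqrt 2 * (\<Sum>j=1..N. mu j * lam j ^ m * (p 1 j * s 2 j + p 2 j * s 3 j))"
  by (simp add: BtS_def)
lemma CtS_Suc: "CtS N lam mu (Suc m) p s = sqrt 2 * (\<Sum>j=1..N. mu j * lam j ^ m * (p 2 j * s 1 j + p 3 j * s 2 j))"
  by (simp add: CtS_def)

lemma traj_T:
  assumes sol: "solves N lam mu I phi psi" and x: "x \<in> I"
  defines "p \<equiv> phi x" and "s \<equiv> psi x"
  shows "((\<lambda>t. BtS N lam mu m (phi t) (psi t)) has_real_derivative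
            -2 * BtS N lam mu (Suc m) p s - 2 * qt N mu p s * AtS N lam mu m p s) (at x)"
    "((\<lambda>t. CtS N lam mu m (phi t) (psi t)) has_real_derivative
            2 * CtS N lam mu (Suc m) p s + 2 * rt N mu p s * AtS N lam mu m p s) (at x)"
    "((\<lambda>t. AtS N lam mu m (phi t) (psi t)) has_real_derivative
            qt N mu p s * CtS N lam mu m p s - rt N mu p s * BtS N lam mu m p s) (at x)"
proof -
  note TJ = traj_j[OF sol x]
  let ?q = "qt N mu p s" and ?r = "rt N mu p s"
  show "((\<lambda>t. BtS N lam mu m (phi t) (psi t)) has_real_derivative
            -2 * BtS N lam mu (Suc m) p s - 2 * qt N mu p s * AtS N lam mu m p s) (at x)"
  proof (cases m)
    case 0
    then show ?thesis using qt_BtS1[of N lam mu p s] by (simp add: BtS_def AtS_def)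
  next
    case (Suc m')
    have "((\<lambda>t. sqrt 2 * (\<Sum>j=1..N. mu j * lam j ^ m' * (phi t 1 j * psi t 2 j + phi t 2 j * psi t 3 j))) has_real_derivative
           sqrt 2 * (\<Sum>j=1..N. mu j * lam j ^ m' * (-2 * lam j * (p 1 j * s 2 j + p 2 j * s 3 j) - sqrt 2 * ?q * (p 1 j * s 1 j - p 3 j * s 3 j)))) (at x)"
      unfolding p_def s_def by (intro DERIV_cmult DERIV_sum TJ) auto
    then show ?thesis unfolding Suc AtS_Suc BtS_Suc CtS_Suc
      by (rule DERIV_cong) (simp add: algebra_simps sqrt2_twice sum_negf sum.distrib sum_distrib_left sum_subtractf)
  qed
  show "((\<lambda>t. CtS N lam mu m (phi t) (psi t)) has_real_derivative
            2 * CtS N lam mu (Suc m) p s + 2 * rt N mu p s * AtS N lam mu m p s) (at x)"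
  proof (cases m)
    case 0
    then show ?thesis using rt_CtS1[of N lam mu p s] by (simp add: CtS_def AtS_def)
  next
    case (Suc m')
    have "((\<lambda>t. sqrt 2 * (\<Sum>j=1..N. mu j * lam j ^ m' * (phi t 2 j * psi t 1 j + phi t 3 j * psi t 2 j))) has_real_derivative
           sqrt 2 * (\<Sum>j=1..N. mu j * lam j ^ m' * (2 * lam j * (p 2 j * s 1 j + p 3 j * s 2 j) + sqrt 2 * ?r * (p 1 j * s 1 j - p 3 j * s 3 j)))) (at x)"
      unfolding p_def s_def by (intro DERIV_cmult DERIV_sum TJ) auto
    then show ?thesis unfolding Suc AtS_Suc BtS_Suc CtS_Suc
      by (rule DERIV_cong) (simp add: algebra_simps sqrt2_twice sum_negf sum.distrib sum_distrib_left sum_subtractf)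
  qed
  show "((\<lambda>t. AtS N lam mu m (phi t) (psi t)) has_real_derivative
            qt N mu p s * CtS N lam mu m p s - rt N mu p s * BtS N lam mu m p s) (at x)"
  proof (cases m)
    case 0
    then show ?thesis by (simp add: CtS_def AtS_def BtS_def)
  next
    case (Suc m')
    have "((\<lambda>t. (\<Sum>j=1..N. mu j * lam j ^ m' * (phi t 1 j * psi t 1 j - phi t 3 j * psi t 3 j))) has_real_derivative
           (\<Sum>j=1..N. mu j * lam j ^ m' * (sqrt 2 * (?q * (p 2 j * s 1 j + p 3 j * s 2 j) - ?r * (p 1 j * s 2 j + p 2 j * s 3 j))))) (at x)"
      unfolding p_def s_def by (intro DERIV_cmult DERIV_sum TJ) auto
    then show ?thesis unfolding Suc AtS_Suc BtS_Suc CtS_Suc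
      by (rule DERIV_cong) (simp add: algebra_simps sqrt2_twice sum_negf sum.distrib sum_distrib_left sum_subtractf)
  qed
qed



definition av where "av N lam mu m p s = deval (a_dp m) (jq N lam mu p s) (jr N lam mu p s)"
definition bv where "bv N lam mu m p s = deval (b_dp m) (jq N lam mu p s) (jr N lam mu p s)"
definition cv where "cv N lam mu m p s = deval (c_dp m) (jq N lam mu p s) (jr N lam mu p s)"
definition avD where "avD N lam mu m p s = deval (dD (a_dp m)) (jq N lam mu p s) (jr N lam mu p s)"
definition bvD where "bvD N lam mu m p s = deval (dD (b_dp m)) (jq N lam mu p s) (jr N lam mu p s)"
definition cvD where "cvD N lam mu m p s = deval (dD (c_dp m)) (jq N lam mu p s) (jr N lam mu p s)"

lemma v0: "av N lam mu 0 p s = -1" "bv N lam mu 0 p s = 0" "cv N lam mu 0 p s = 0"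
  by (simp_all add: av_def bv_def cv_def abc_0)

lemma bvS: "bv N lam mu (Suc k) p s = -1/2 * bvD N lam mu k p s - qt N mu p s * av N lam mu k p s"
  by (simp add: bv_def bvD_def av_def abc_Suc_parts jq0)
lemma cvS: "cv N lam mu (Suc k) p s = 1/2 * cvD N lam mu k p s - rt N mu p s * av N lam mu k p s"
  by (simp add: cv_def cvD_def av_def abc_Suc_parts jr0)
lemma avD_eq: "avD N lam mu k p s = qt N mu p s * cv N lam mu k p s - rt N mu p s * bv N lam mu k p s"
  using a_prop[of k] by (simp add: avD_def cv_def bv_def jq0 jr0)

lemma traj_v:
  assumes sol: "solves N lam mu I phi psi" and x: "x \<in> I"
  shows "((\<lambda>t. av N lam mu m (phi t) (psi t)) has_real_derivative avD N lam mu m (phi x) (psi x)) (at x)"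
    "((\<lambda>t. bv N lam mu m (phi t) (psi t)) has_real_derivative bvD N lam mu m (phi x) (psi x)) (at x)"
    "((\<lambda>t. cv N lam mu m (phi t) (psi t)) has_real_derivative cvD N lam mu m (phi x) (psi x)) (at x)"
  unfolding av_def avD_def bv_def bvD_def cv_def cvD_def
  by (rule traj_deriv_dp[OF sol x])+

fun Gam :: "nat \<Rightarrow> (nat \<Rightarrow> real) \<Rightarrow> (nat \<Rightarrow> real) \<Rightarrow> nat \<Rightarrow> state \<Rightarrow> state \<Rightarrow> real" where
  "Gam N lam mu 0 p s = 1"
| "Gam N lam mu (Suc i) p s = (\<Sum>k\<le>i. Gam N lam mu k p s * av N lam mu (Suc i - k) p s) - AtS N lam mu (Suc i) p s"


lemma traj_main:
  assumes I: "open I" and sol: "solves N lam mu I phi psi"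
  shows "(\<forall>m\<le>i. \<forall>x\<in>I.
            AtS N lam mu m (phi x) (psi x) = (\<Sum>k\<le>m. Gam N lam mu k (phi x) (psi x) * av N lam mu (m - k) (phi x) (psi x))
          \<and> BtS N lam mu m (phi x) (psi x) = (\<Sum>k\<le>m. Gam N lam mu k (phi x) (psi x) * bv N lam mu (m - k) (phi x) (psi x))
          \<and> CtS N lam mu m (phi x) (psi x) = (\<Sum>k\<le>m. Gam N lam mu k (phi x) (psi x) * cv N lam mu (m - k) (phi x) (psi x)))
       \<and> (\<forall>k\<le>i. \<forall>x\<in>I. ((\<lambda>t. Gam N lam mu k (phi t) (psi t)) has_real_derivative 0) (at x))"
proof (induction i)
  case 0
  show ?case by (simp add: v0 AtS_def BtS_def CtS_def)
next
  case (Suc i)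
  let ?G = "\<lambda>k t. Gam N lam mu k (phi t) (psi t)"
  let ?a = "\<lambda>m t. av N lam mu m (phi t) (psi t)" and ?b = "\<lambda>m t. bv N lam mu m (phi t) (psi t)"
    and ?c = "\<lambda>m t. cv N lam mu m (phi t) (psi t)"
  let ?aD = "\<lambda>m t. avD N lam mu m (phi t) (psi t)" and ?bD = "\<lambda>m t. bvD N lam mu m (phi t) (psi t)"
    and ?cD = "\<lambda>m t. cvD N lam mu m (phi t) (psi t)"
  let ?A = "\<lambda>m t. AtS N lam mu m (phi t) (psi t)" and ?B = "\<lambda>m t. BtS N lam mu m (phi t) (psi t)"
    and ?C = "\<lambda>m t. CtS N lam mu m (phi t) (psi t)"
  let ?q = "\<lambda>t. qt N mu (phi t) (psi t)" and ?r = "\<lambda>t. rt N mu (phi t) (psi t)"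
  have IHA: "\<And>t. t \<in> I \<Longrightarrow> ?A i t = (\<Sum>k\<le>i. ?G k t * ?a (i - k) t)"
    and IHB: "\<And>t. t \<in> I \<Longrightarrow> ?B i t = (\<Sum>k\<le>i. ?G k t * ?b (i - k) t)"
    and IHC: "\<And>t. t \<in> I \<Longrightarrow> ?C i t = (\<Sum>k\<le>i. ?G k t * ?c (i - k) t)"
    using Suc.IH by auto
  have IHG: "\<And>k x. k \<le> i \<Longrightarrow> x \<in> I \<Longrightarrow> ((\<lambda>t. ?G k t) has_real_derivative 0) (at x)"
    using Suc.IH by auto
  have newB: "?B (Suc i) x = (\<Sum>k\<le>Suc i. ?G k x * ?b (Suc i - k) x)"
    and newC: "?C (Suc i) x = (\<Sum>k\<le>Suc i. ?G k x * ?c (Suc i - k) x)" if x: "x \<in> I" for x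
  proof -
    have dB: "((\<lambda>t. \<Sum>k\<le>i. ?G k t * ?b (i - k) t) has_real_derivative (\<Sum>k\<le>i. ?G k x * ?bD (i - k) x)) (at x)"
      by (rule DERIV_cong[OF DERIV_sum[OF DERIV_mult[OF IHG traj_v(2)[OF sol x]]]]) (use x in \<open>auto simp: mult.commute\<close>)
    have dB': "((\<lambda>t. ?B i t) has_real_derivative (\<Sum>k\<le>i. ?G k x * ?bD (i - k) x)) (at x)"
      by (rule has_field_derivative_transform_within_open[OF dB I x]) (simp add: IHB)
    have EB: "-2 * ?B (Suc i) x - 2 * ?q x * ?A i x = (\<Sum>k\<le>i. ?G k x * ?bD (i - k) x)"
      using DERIV_unique[OF traj_T(1)[OF sol x] dB'] .
    have "?B (Suc i) x = (\<Sum>k\<le>i. ?G k x * (-1/2 * ?bD (i - k) x - ?q x * ?a (i - k) x))"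
    proof -
      have "(\<Sum>k\<le>i. ?G k x * (-1/2 * ?bD (i - k) x - ?q x * ?a (i - k) x))
          = (\<Sum>k\<le>i. (-1/2) * (?G k x * ?bD (i - k) x) + (- ?q x) * (?G k x * ?a (i - k) x))"
        by (intro sum.cong refl) (simp add: algebra_simps)
      also have "\<dots> = (-1/2) * (\<Sum>k\<le>i. ?G k x * ?bD (i - k) x) + (- ?q x) * (\<Sum>k\<le>i. ?G k x * ?a (i - k) x)"
        by (simp only: sum.distrib sum_distrib_left)
      finally show ?thesis using EB IHA[OF x] by (simp add: algebra_simps)
    qed
    also have "\<dots> = (\<Sum>k\<le>i. ?G k x * ?b (Suc i - k) x)"
      by (intro sum.cong refl) (simp add: Suc_diff_le bvS)
    finally show "?B (Suc i) x = (\<Sum>k\<le>Suc i. ?G k x * ?b (Suc i - k) x)"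
      by (simp add: v0)
    have dC: "((\<lambda>t. \<Sum>k\<le>i. ?G k t * ?c (i - k) t) has_real_derivative (\<Sum>k\<le>i. ?G k x * ?cD (i - k) x)) (at x)"
      by (rule DERIV_cong[OF DERIV_sum[OF DERIV_mult[OF IHG traj_v(3)[OF sol x]]]]) (use x in \<open>auto simp: mult.commute\<close>)
    have dC': "((\<lambda>t. ?C i t) has_real_derivative (\<Sum>k\<le>i. ?G k x * ?cD (i - k) x)) (at x)"
      by (rule has_field_derivative_transform_within_open[OF dC I x]) (simp add: IHC)
    have EC: "2 * ?C (Suc i) x + 2 * ?r x * ?A i x = (\<Sum>k\<le>i. ?G k x * ?cD (i - k) x)"
      using DERIV_unique[OF traj_T(2)[OF sol x] dC'] .
    have "?C (Suc i) x = (\<Sum>k\<le>i. ?G k x * (1/2 * ?cD (i - k) x - ?r x * ?a (i - k) x))"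
    proof -
      have "(\<Sum>k\<le>i. ?G k x * (1/2 * ?cD (i - k) x - ?r x * ?a (i - k) x))
          = (\<Sum>k\<le>i. (1/2) * (?G k x * ?cD (i - k) x) + (- ?r x) * (?G k x * ?a (i - k) x))"
        by (intro sum.cong refl) (simp add: algebra_simps)
      also have "\<dots> = (1/2) * (\<Sum>k\<le>i. ?G k x * ?cD (i - k) x) + (- ?r x) * (\<Sum>k\<le>i. ?G k x * ?a (i - k) x)"
        by (simp only: sum.distrib sum_distrib_left)
      finally show ?thesis using EC IHA[OF x] by (simp add: algebra_simps)
    qed
    also have "\<dots> = (\<Sum>k\<le>i. ?G k x * ?c (Suc i - k) x)"
      by (intro sum.cong refl) (simp add: Suc_diff_le cvS)
    finally show "?C (Suc i) x = (\<Sum>k\<le>Suc i. ?G k x * ?c (Suc i - k) x)"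
      by (simp add: v0)
  qed
  have newA: "?A (Suc i) x = (\<Sum>k\<le>Suc i. ?G k x * ?a (Suc i - k) x)" for x
    by (simp add: v0)
  have newG: "((\<lambda>t. ?G (Suc i) t) has_real_derivative 0) (at x)" if x: "x \<in> I" for x
  proof -
    have d: "((\<lambda>t. (\<Sum>k\<le>i. ?G k t * ?a (Suc i - k) t) - ?A (Suc i) t) has_real_derivative
         (\<Sum>k\<le>i. ?G k x * ?aD (Suc i - k) x) - (?q x * ?C (Suc i) x - ?r x * ?B (Suc i) x)) (at x)"
      by (rule DERIV_cong[OF DERIV_diff[OF DERIV_sum[OF DERIV_mult[OF IHG traj_v(1)[OF sol x]]] traj_T(3)[OF sol x]]])
         (use x in \<open>auto simp: mult.commute\<close>)
    have "(\<Sum>k\<le>i. ?G k x * ?aD (Suc i - k) x) - (?q x * ?C (Suc i) x - ?r x * ?B (Suc i) x) = 0"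
      unfolding newB[OF x] newC[OF x]
      by (simp add: avD_eq v0 sum_distrib_left sum_subtractf algebra_simps)
    with d show ?thesis by simp
  qed
  show ?case
    using Suc.IH newA newB newC newG by (auto simp: le_Suc_eq)
qed



lemma swap_tri:
  fixes f :: "nat \<Rightarrow> nat \<Rightarrow> real"
  shows "(\<Sum>m\<le>N. \<Sum>k\<le>m. f m k) = (\<Sum>n\<le>N. \<Sum>k\<le>N - n. f (n + k) k)"
proof -
  have "(\<Sum>m\<le>N. \<Sum>k\<le>m. f m k) = (\<Sum>(m,k)\<in>Sigma {..N} (\<lambda>m. {..m}). f m k)"
    by (simp add: sum.Sigma)
  also have "\<dots> = (\<Sum>(n,k)\<in>Sigma {..N} (\<lambda>n. {..N - n}). f (n + k) k)"
    by (rule sum.reindex_bij_witness[where i="\<lambda>(n,k). (n+k,k)" and j="\<lambda>(m,k). (m-k,k)"]) auto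
  also have "\<dots> = (\<Sum>n\<le>N. \<Sum>k\<le>N - n. f (n + k) k)"
    by (simp add: sum.Sigma)
  finally show ?thesis .
qed

definition PP :: "nat \<Rightarrow> (nat \<Rightarrow> real) \<Rightarrow> real poly" where
  "PP N lam = (\<Prod>j\<in>{1..N}. [:- lam j, 1:])"

lemma PP_degree: "degree (PP N lam) = N"
  unfolding PP_def by (subst degree_prod_eq_sum_degree) auto

lemma PP_lead: "coeff (PP N lam) N = 1"
  using lead_coeff_prod[of "\<lambda>j. [:- lam j, 1:]" "{1..N}"] PP_degree[of N lam]
  by (simp add: PP_def)

lemma PP_root:
  assumes j: "j \<in> {1..N}" shows "(\<Sum>m\<le>N. coeff (PP N lam) m * lam j ^ m) = 0"
proof -
  have "poly (PP N lam) (lam j) = 0"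
    unfolding PP_def poly_prod by (rule prod_zero) (use j in auto)
  then show ?thesis using poly_altdef[of "PP N lam" "lam j"] PP_degree[of N lam] by simp
qed

lemma PP_BtS: "(\<Sum>m\<le>N. coeff (PP N lam) m * BtS N lam mu (Suc m) p s) = 0"
proof -
  have "(\<Sum>m\<le>N. coeff (PP N lam) m * BtS N lam mu (Suc m) p s)
      = sqrt 2 * (\<Sum>j=1..N. mu j * (p 1 j * s 2 j + p 2 j * s 3 j) * (\<Sum>m\<le>N. coeff (PP N lam) m * lam j ^ m))"
    by (simp add: BtS_Suc sum_distrib_left sum_distrib_right mult_ac sum.swap[of _ "{..N}"])
  also have "\<dots> = 0" by (simp add: PP_root)
  finally show ?thesis .
qed

lemma PP_CtS: "(\<Sum>m\<le>N. coeff (PP N lam) m * CtS N lam mu (Suc m) p s) = 0"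
proof -
  have "(\<Sum>m\<le>N. coeff (PP N lam) m * CtS N lam mu (Suc m) p s)
      = sqrt 2 * (\<Sum>j=1..N. mu j * (p 2 j * s 1 j + p 3 j * s 2 j) * (\<Sum>m\<le>N. coeff (PP N lam) m * lam j ^ m))"
    by (simp add: CtS_Suc sum_distrib_left sum_distrib_right mult_ac sum.swap[of _ "{..N}"])
  also have "\<dots> = 0" by (simp add: PP_root)
  finally show ?thesis .
qed


theorem theorem4p2:
  fixes N :: nat and lam mu :: "nat \<Rightarrow> real"
  assumes "N \<ge> 1"
    and "inj_on lam {1..N}"
    and "\<forall>j\<in>{1..N}. mu j \<noteq> 0"
  shows "\<exists>\<alpha> :: nat \<Rightarrow> state \<Rightarrow> state \<Rightarrow> real.
           (\<forall>k<N. integral_of_motion N lam mu (\<alpha> k))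
         \<and> (\<forall>I phi psi. open I \<and> is_interval I \<and> solves N lam mu I phi psi \<longrightarrow>
              (\<forall>x\<in>I.
                 K1 N (jet (\<lambda>t. qt N mu (phi t) (psi t)) x) (jet (\<lambda>t. rt N mu (phi t) (psi t)) x)
                 + (\<Sum>k<N. \<alpha> k (phi x) (psi x) *
                     K1 k (jet (\<lambda>t. qt N mu (phi t) (psi t)) x) (jet (\<lambda>t. rt N mu (phi t) (psi t)) x)) = 0
               \<and> K2 N (jet (\<lambda>t. qt N mu (phi t) (psi t)) x) (jet (\<lambda>t. rt N mu (phi t) (psi t)) x)
                 + (\<Sum>k<N. \<alpha> k (phi x) (psi x) *
                     K2 k (jet (\<lambda>t. qt N mu (phi t) (psi t)) x) (jet (\<lambda>t. rt N mu (phi t) (psi t)) x)) = 0))"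
proof -
  define pc where "pc m = coeff (PP N lam) m" for m
  define \<alpha> where "\<alpha> n p s = (\<Sum>k\<le>N - n. pc (n + k) * Gam N lam mu k p s)" for n p s
  have IM: "integral_of_motion N lam mu (\<alpha> n)" for n
    unfolding integral_of_motion_def
  proof (intro allI impI ballI)
    fix I phi psi x y
    assume H: "open I \<and> is_interval I \<and> solves N lam mu I phi psi" and x: "x \<in> I" and y: "y \<in> I"
    have I: "open I" and sol: "solves N lam mu I phi psi" and cvx: "convex I"
      using H is_interval_convex by auto
    have G0: "\<And>k z. k \<le> N \<Longrightarrow> z \<in> I \<Longrightarrow> ((\<lambda>t. Gam N lam mu k (phi t) (psi t)) has_real_derivative 0) (at z)"
      using traj_main[OF I sol, of N] by auto
    have D: "((\<lambda>t. \<alpha> n (phi t) (psi t)) has_real_derivative 0) (at z within I)" if z: "z \<in> I" for z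
    proof -
      have "((\<lambda>t. \<alpha> n (phi t) (psi t)) has_real_derivative (\<Sum>k\<le>N - n. pc (n + k) * 0)) (at z)"
        unfolding \<alpha>_def by (intro DERIV_sum DERIV_cmult G0 z) auto
      then show ?thesis by (simp add: has_field_derivative_at_within)
    qed
    obtain c where "\<forall>z\<in>I. \<alpha> n (phi z) (psi z) = c"
      using has_field_derivative_zero_constant[OF cvx D] by blast
    then show "\<alpha> n (phi x) (psi x) = \<alpha> n (phi y) (psi y)" using x y by simp
  qed
  have EQ: "K1 N (jet (\<lambda>t. qt N mu (phi t) (psi t)) x) (jet (\<lambda>t. rt N mu (phi t) (psi t)) x)
                 + (\<Sum>k<N. \<alpha> k (phi x) (psi x) *
                     K1 k (jet (\<lambda>t. qt N mu (phi t) (psi t)) x) (jet (\<lambda>t. rt N mu (phi t) (psi t)) x)) = 0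
               \<and> K2 N (jet (\<lambda>t. qt N mu (phi t) (psi t)) x) (jet (\<lambda>t. rt N mu (phi t) (psi t)) x)
                 + (\<Sum>k<N. \<alpha> k (phi x) (psi x) *
                     K2 k (jet (\<lambda>t. qt N mu (phi t) (psi t)) x) (jet (\<lambda>t. rt N mu (phi t) (psi t)) x)) = 0"
    if H: "open I \<and> is_interval I \<and> solves N lam mu I phi psi" and x: "x \<in> I" for I phi psi x
  proof -
    have I: "open I" and sol: "solves N lam mu I phi psi" using H by auto
    let ?G = "\<lambda>k. Gam N lam mu k (phi x) (psi x)"
    let ?b = "\<lambda>n. bv N lam mu n (phi x) (psi x)" and ?c = "\<lambda>n. cv N lam mu n (phi x) (psi x)"
    have TM: "\<And>m. m \<le> Suc N \<Longrightarrow> BtS N lam mu m (phi x) (psi x) = (\<Sum>k\<le>m. ?G k * ?b (m - k))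
                 \<and> CtS N lam mu m (phi x) (psi x) = (\<Sum>k\<le>m. ?G k * ?c (m - k))"
      using traj_main[OF I sol, of "Suc N"] x by blast
    have TB: "BtS N lam mu (Suc m) (phi x) (psi x) = (\<Sum>k\<le>m. ?G k * ?b (Suc m - k))"
      and TC: "CtS N lam mu (Suc m) (phi x) (psi x) = (\<Sum>k\<le>m. ?G k * ?c (Suc m - k))" if "m \<le> N" for m
      using TM[of "Suc m"] that by (simp_all add: v0)
    have aN: "\<alpha> N (phi x) (psi x) = 1"
      by (simp add: \<alpha>_def pc_def PP_lead)
    have main: "(\<Sum>n\<le>N. \<alpha> n (phi x) (psi x) * v (Suc n)) = 0"
      if TV: "\<And>m. m \<le> N \<Longrightarrow> W m = (\<Sum>k\<le>m. ?G k * v (Suc m - k))"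
        and W0: "(\<Sum>m\<le>N. pc m * W m) = 0" for v W :: "nat \<Rightarrow> real"
    proof -
      have "0 = (\<Sum>m\<le>N. pc m * W m)" using W0 by simp
      also have "\<dots> = (\<Sum>m\<le>N. \<Sum>k\<le>m. pc m * ?G k * v (Suc m - k))"
        by (intro sum.cong refl) (simp add: TV sum_distrib_left mult.assoc)
      also have "\<dots> = (\<Sum>n\<le>N. \<Sum>k\<le>N - n. pc (n + k) * ?G k * v (Suc (n + k) - k))"
        by (rule swap_tri)
      also have "\<dots> = (\<Sum>n\<le>N. \<alpha> n (phi x) (psi x) * v (Suc n))"
        by (intro sum.cong refl) (simp add: \<alpha>_def sum_distrib_right)
      finally show ?thesis by simp
    qed
    have mB: "(\<Sum>n\<le>N. \<alpha> n (phi x) (psi x) * ?b (Suc n)) = 0"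
      by (rule main[OF TB]) (use PP_BtS[of N lam mu "phi x" "psi x"] in \<open>simp_all add: pc_def\<close>)
    have mC: "(\<Sum>n\<le>N. \<alpha> n (phi x) (psi x) * ?c (Suc n)) = 0"
      by (rule main[OF TC]) (use PP_CtS[of N lam mu "phi x" "psi x"] in \<open>simp_all add: pc_def\<close>)
    have K1e: "K1 n (jet (\<lambda>t. qt N mu (phi t) (psi t)) x) (jet (\<lambda>t. rt N mu (phi t) (psi t)) x) = -2 * ?b (Suc n)"
      and K2e: "K2 n (jet (\<lambda>t. qt N mu (phi t) (psi t)) x) (jet (\<lambda>t. rt N mu (phi t) (psi t)) x) = 2 * ?c (Suc n)" for n
      by (simp_all add: K1_def K2_def jet_eq[OF I sol x] bv_def cv_def)
    have sB: "?b (Suc N) + (\<Sum>k<N. \<alpha> k (phi x) (psi x) * ?b (Suc k)) = 0"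
      using mB by (simp add: lessThan_Suc_atMost[symmetric] aN)
    have sC: "?c (Suc N) + (\<Sum>k<N. \<alpha> k (phi x) (psi x) * ?c (Suc k)) = 0"
      using mC by (simp add: lessThan_Suc_atMost[symmetric] aN)
    show ?thesis
    proof
      have "(\<Sum>k<N. \<alpha> k (phi x) (psi x) * (-2 * ?b (Suc k))) = -2 * (\<Sum>k<N. \<alpha> k (phi x) (psi x) * ?b (Suc k))"
        by (simp add: sum_distrib_left mult_ac)
      then show "K1 N (jet (\<lambda>t. qt N mu (phi t) (psi t)) x) (jet (\<lambda>t. rt N mu (phi t) (psi t)) x)
                 + (\<Sum>k<N. \<alpha> k (phi x) (psi x) *
                     K1 k (jet (\<lambda>t. qt N mu (phi t) (psi t)) x) (jet (\<lambda>t. rt N mu (phi t) (psi t)) x)) = 0"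
        unfolding K1e using sB by linarith
      have "(\<Sum>k<N. \<alpha> k (phi x) (psi x) * (2 * ?c (Suc k))) = 2 * (\<Sum>k<N. \<alpha> k (phi x) (psi x) * ?c (Suc k))"
        by (simp add: sum_distrib_left mult_ac)
      then show "K2 N (jet (\<lambda>t. qt N mu (phi t) (psi t)) x) (jet (\<lambda>t. rt N mu (phi t) (psi t)) x)
                 + (\<Sum>k<N. \<alpha> k (phi x) (psi x) *
                     K2 k (jet (\<lambda>t. qt N mu (phi t) (psi t)) x) (jet (\<lambda>t. rt N mu (phi t) (psi t)) x)) = 0"
        unfolding K2e using sC by linarith
    qed
  qed
  show ?thesis
    by (rule exI[of _ \<alpha>]) (use IM EQ in blast)
qed

end
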